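(* For a word $w$ over $[n]$, the following are equivalent: (1) $w$ is $n$-complete; (2) $w$ synchronizes every member of $\mathcal{F}(n)$; (3) $w$ synchronizes every member of $\mathcal{F}^+(n)$; (4) $w$ synchronizes every member of $\mathcal{A}(n)$.
   Context: A Boolean network (BN) with component set $[n]$ is $f:\{0,1\}^n\to\{0,1\}^n$; its signed interaction digraph has vertex set $[n]$ and a positive (negative) arc from $j$ to $i$ iff for some $x$ with $x_j=0$, $f_i(x+e_j)-f_i(x)$ is positive (negative). Cycles have no repeated vertices (loops are cycles), signed by the product of arc signs. $\mathcal{A}(n)$: BNs with component set $[n]$ whose interaction digraph is acyclic. $\mathcal{F}(n)$: BNs with component set $[n]$ with a unique fixed point and such that all cycles of the signed interaction digraph have the same sign. $\mathcal{F}^+(n)$: synchronizing BNs with component set $[n]$ whose signed interaction digraph has no negative cycles. A word $u$ contains $v$ if $v$ is obtained by deleting letters of $u$; $w$ is $n$-complete if it contains every permutation of $[n]$. $f^i(x)$ is $x$ with $x_i$ replaced by $f_i(x)$; $f^{i_1\cdots i_\ell}=f^{i_\ell}\circ\cdots\circ f^{i_1}$; $w$ synchronizes $f$ if $f^w$ is constant; $f$ is synchronizing if some word synchronizes it. *)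

theory Defs
  imports Main "HOL-Library.Sublist"
begin

text \<open>Components [n] are represented as 0,...,n-1. A configuration in {0,1}^n is a
  function nat => bool that is False outside {0..<n}.\<close>

type_synonym config = "nat \<Rightarrow> bool"

definition configs :: "nat \<Rightarrow> config set" where
  "configs n = {x. \<forall>i. n \<le> i \<longrightarrow> \<not> x i}"

text \<open>A Boolean network with component set [n]: maps configurations to configurations
  (only its values on configs n matter).\<close>
definition BN :: "nat \<Rightarrow> (config \<Rightarrow> config) \<Rightarrow> bool" where
  "BN n f \<longleftrightarrow> (\<forall>x\<in>configs n. f x \<in> configs n)"

text \<open>Signed arc from j to i; sign True = positive, False = negative.\<close>
definition signed_arc :: "nat \<Rightarrow> (config \<Rightarrow> config) \<Rightarrow> nat \<Rightarrow> nat \<Rightarrow> bool \<Rightarrow> bool" where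
  "signed_arc n f j i s \<longleftrightarrow> j < n \<and> i < n \<and>
     (\<exists>x\<in>configs n. \<not> x j \<and>
        (if s then \<not> f x i \<and> f (x(j := True)) i
              else f x i \<and> \<not> f (x(j := True)) i))"

definition is_cycle :: "nat \<Rightarrow> (config \<Rightarrow> config) \<Rightarrow> nat list \<Rightarrow> bool list \<Rightarrow> bool" where
  "is_cycle n f vs ss \<longleftrightarrow> vs \<noteq> [] \<and> distinct vs \<and> length ss = length vs \<and>
     (\<forall>t < length vs. signed_arc n f (vs ! t) (vs ! ((t + 1) mod length vs)) (ss ! t))"

definition positive_cycle :: "bool list \<Rightarrow> bool" where
  "positive_cycle ss \<longleftrightarrow> even (length (filter Not ss))"

definition acyclic_BN :: "nat \<Rightarrow> (config \<Rightarrow> config) \<Rightarrow> bool" where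
  "acyclic_BN n f \<longleftrightarrow> (\<nexists>vs ss. is_cycle n f vs ss)"

definition async_update :: "(config \<Rightarrow> config) \<Rightarrow> nat \<Rightarrow> config \<Rightarrow> config" where
  "async_update f i x = x(i := f x i)"

text \<open>f^{i_1...i_l} = f^{i_l} o ... o f^{i_1}: apply letters left to right.\<close>
fun word_update :: "(config \<Rightarrow> config) \<Rightarrow> nat list \<Rightarrow> config \<Rightarrow> config" where
  "word_update f [] x = x"
| "word_update f (i # w) x = word_update f w (async_update f i x)"

definition synchronizes :: "nat \<Rightarrow> nat list \<Rightarrow> (config \<Rightarrow> config) \<Rightarrow> bool" where
  "synchronizes n w f \<longleftrightarrow> (\<exists>c. \<forall>x\<in>configs n. word_update f w x = c)"

definition synchronizing :: "nat \<Rightarrow> (config \<Rightarrow> config) \<Rightarrow> bool" where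
  "synchronizing n f \<longleftrightarrow> (\<exists>w. set w \<subseteq> {0..<n} \<and> synchronizes n w f)"

definition class_A :: "nat \<Rightarrow> (config \<Rightarrow> config) set" where
  "class_A n = {f. BN n f \<and> acyclic_BN n f}"

definition class_F :: "nat \<Rightarrow> (config \<Rightarrow> config) set" where
  "class_F n = {f. BN n f \<and> (\<exists>!x. x \<in> configs n \<and> f x = x) \<and>
     ((\<forall>vs ss. is_cycle n f vs ss \<longrightarrow> positive_cycle ss) \<or>
      (\<forall>vs ss. is_cycle n f vs ss \<longrightarrow> \<not> positive_cycle ss))}"

definition class_F_plus :: "nat \<Rightarrow> (config \<Rightarrow> config) set" where
  "class_F_plus n = {f. BN n f \<and> synchronizing n f \<and>
     (\<forall>vs ss. is_cycle n f vs ss \<longrightarrow> positive_cycle ss)}"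

definition n_complete :: "nat \<Rightarrow> nat list \<Rightarrow> bool" where
  "n_complete n w \<longleftrightarrow> (\<forall>p. distinct p \<and> set p = {0..<n} \<longrightarrow> subseq p w)"

end

theory Submission
  imports Defs
begin

definition XX :: "nat set \<Rightarrow> config \<Rightarrow> config set" where
  "XX V b = {x. \<forall>i. i \<notin> V \<longrightarrow> x i = b i}"

definition garc :: "(config \<Rightarrow> config) \<Rightarrow> nat set \<Rightarrow> config \<Rightarrow> nat \<Rightarrow> nat \<Rightarrow> bool \<Rightarrow> bool" where
  "garc f V b j i s \<longleftrightarrow> j \<in> V \<and> i \<in> V \<and>
     (\<exists>x\<in>XX V b. \<not> x j \<and>
        (if s then \<not> f x i \<and> f (x(j := True)) i
              else f x i \<and> \<not> f (x(j := True)) i))"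

definition cyc :: "(nat \<Rightarrow> nat \<Rightarrow> bool \<Rightarrow> bool) \<Rightarrow> nat list \<Rightarrow> bool list \<Rightarrow> bool" where
  "cyc A vs ss \<longleftrightarrow> vs \<noteq> [] \<and> distinct vs \<and> length ss = length vs \<and>
     (\<forall>t < length vs. A (vs ! t) (vs ! ((t + 1) mod length vs)) (ss ! t))"

fun wk :: "(nat \<Rightarrow> nat \<Rightarrow> bool \<Rightarrow> bool) \<Rightarrow> nat list \<Rightarrow> bool list \<Rightarrow> bool" where
  "wk A [v] [] = True"
| "wk A (u # v # vs) (s # ss) = (A u v s \<and> wk A (v # vs) ss)"
| "wk A _ _ = False"

abbreviation nneg :: "bool list \<Rightarrow> nat" where "nneg ss \<equiv> length (filter Not ss)"

lemma wk_nonempty: "wk A vs ss \<Longrightarrow> vs \<noteq> []"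
  by (induction A vs ss rule: wk.induct) auto

lemma wk_length: "wk A vs ss \<Longrightarrow> length vs = Suc (length ss)"
  by (induction A vs ss rule: wk.induct) auto

lemma wk_nth: "wk A vs ss \<Longrightarrow> t < length ss \<Longrightarrow> A (vs ! t) (vs ! Suc t) (ss ! t)"
proof (induction A vs ss arbitrary: t rule: wk.induct)
  case (2 A u v vs s ss)
  then show ?case by (cases t) auto
qed auto

lemma wk_of_nth: "length vs = Suc (length ss) \<Longrightarrow> (\<forall>t < length ss. A (vs ! t) (vs ! Suc t) (ss ! t)) \<Longrightarrow> wk A vs ss"
proof (induction ss arbitrary: vs)
  case Nil
  then show ?case by (cases vs) auto
next
  case (Cons s ss)
  then obtain u v vs' where vs: "vs = u # v # vs'"
    by (metis length_Suc_conv)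
  have "A u v s" using Cons.prems(2) vs by force
  moreover have "wk A (v # vs') ss"
    using Cons.IH[of "v # vs'"] Cons.prems vs by fastforce
  ultimately show ?case using vs by simp
qed

lemma wk_mono: "wk A vs ss \<Longrightarrow> (\<And>j i s. A j i s \<Longrightarrow> B j i s) \<Longrightarrow> wk B vs ss"
  by (induction A vs ss rule: wk.induct) auto

lemma wk_app: "wk A vs1 ss1 \<Longrightarrow> wk A vs2 ss2 \<Longrightarrow> last vs1 = hd vs2 \<Longrightarrow>
   wk A (vs1 @ tl vs2) (ss1 @ ss2)"
proof (induction A vs1 ss1 rule: wk.induct)
  case (1 A v)
  then show ?case by (cases vs2) auto
next
  case (2 A u v vs s ss)
  then show ?case by auto
qed auto

lemma wk_split: "wk A (xs @ m # ys) ss \<Longrightarrow> \<exists>s1 s2. ss = s1 @ s2 \<and> wk A (xs @ [m]) s1 \<and> wk A (m # ys) s2"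
proof (induction xs arbitrary: ss)
  case Nil
  then show ?case by force
next
  case (Cons a xs)
  show ?case
  proof (cases xs)
    case Nil
    with Cons.prems obtain s ss' where "ss = s # ss'" "A a m s" "wk A (m # ys) ss'"
      by (cases ss) auto
    then show ?thesis using Nil by (intro exI[of _ "[s]"] exI[of _ ss']) auto
  next
    case (Cons c xs')
    with Cons.prems obtain s ss' where ss: "ss = s # ss'" "A a c s" "wk A (xs @ m # ys) ss'"
      by (cases ss) auto
    from Cons.IH[OF ss(3)] obtain s1 s2 where "ss' = s1 @ s2" "wk A (xs @ [m]) s1" "wk A (m # ys) s2"
      by blast
    then show ?thesis using ss Cons by (intro exI[of _ "s # s1"] exI[of _ s2]) auto
  qed
qed

lemma wk_set: "wk A vs ss \<Longrightarrow> (\<And>j i s. A j i s \<Longrightarrow> j \<in> V \<and> i \<in> V) \<Longrightarrow> length vs \<ge> 2 \<Longrightarrow> set vs \<subseteq> V"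
proof (induction A vs ss rule: wk.induct)
  case (2 A u v vs s ss)
  then show ?case by (cases vs; cases ss) auto
qed auto

lemma cyc_mono: "cyc A vs ss \<Longrightarrow> (\<And>j i s. A j i s \<Longrightarrow> B j i s) \<Longrightarrow> cyc B vs ss"
  unfolding cyc_def by blast

lemma wk_distinct_cyc:
  assumes "wk A (cs @ [v]) ss" "distinct cs" "cs \<noteq> []" "hd cs = v"
  shows "cyc A cs ss"
proof -
  have len: "length ss = length cs" using wk_length[OF assms(1)] by simp
  have "A (cs ! t) (cs ! ((t + 1) mod length cs)) (ss ! t)" if "t < length cs" for t
  proof -
    have a: "A ((cs @ [v]) ! t) ((cs @ [v]) ! Suc t) (ss ! t)"
      using wk_nth[OF assms(1)] that len by simp
    show ?thesis
    proof (cases "Suc t < length cs")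
      case True
      then show ?thesis using a that by (simp add: nth_append)
    next
      case False
      then have "Suc t = length cs" using that by simp
      then show ?thesis using a that assms(3,4) by (simp add: nth_append hd_conv_nth)
    qed
  qed
  then show ?thesis using assms len unfolding cyc_def by auto
qed

lemma cyc_wk: "cyc A cs ss \<Longrightarrow> wk A (cs @ [hd cs]) ss"
proof -
  assume c: "cyc A cs ss"
  then have ne: "cs \<noteq> []" and len: "length ss = length cs"
    and arcs: "\<forall>t < length cs. A (cs ! t) (cs ! ((t + 1) mod length cs)) (ss ! t)"
    unfolding cyc_def by auto
  show ?thesis
  proof (rule wk_of_nth)
    show "length (cs @ [hd cs]) = Suc (length ss)" using len by simp
    show "\<forall>t<length ss. A ((cs @ [hd cs]) ! t) ((cs @ [hd cs]) ! Suc t) (ss ! t)"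
    proof (intro allI impI)
      fix t assume t: "t < length ss"
      show "A ((cs @ [hd cs]) ! t) ((cs @ [hd cs]) ! Suc t) (ss ! t)"
      proof (cases "Suc t < length cs")
        case True
        then have m: "Suc t mod length cs = Suc t" by simp
        have "A (cs ! t) (cs ! ((t + 1) mod length cs)) (ss ! t)" using arcs[rule_format, of t] True by simp
        then show ?thesis using m t len True by (auto simp add: nth_append)
      next
        case False
        then have st: "Suc t = length cs" using t len by simp
        have "A (cs ! t) (cs ! ((t + 1) mod length cs)) (ss ! t)" using arcs[rule_format, of t] st by simp
        then show ?thesis using st t len ne by (simp add: nth_append hd_conv_nth)
      qed
    qed
  qed
qed

lemma closed_walk_cycle:
  "wk A vs ss \<Longrightarrow> hd vs = last vs \<Longrightarrow> ss \<noteq> [] \<Longrightarrow>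
   \<exists>cs ts. cyc A cs ts \<and> (odd (nneg ss) \<longrightarrow> odd (nneg ts))"
proof (induction "length vs" arbitrary: vs ss rule: less_induct)
  case less
  have len: "length vs = Suc (length ss)" using wk_length[OF less.prems(1)] .
  then obtain cs v where vs: "vs = cs @ [v]" using less.prems(3)
    by (metis append_butlast_last_id length_0_conv nat.distinct(1))
  have csne: "cs \<noteq> []" using len vs less.prems(3) by auto
  have hdv: "hd cs = v" using less.prems(2) vs csne by simp
  show ?case
  proof (cases "distinct cs")
    case True
    then show ?thesis using wk_distinct_cyc[of A cs v ss] less.prems vs csne hdv by auto
  next
    case False
    then obtain xs ys zs m where cs: "cs = xs @ [m] @ ys @ [m] @ zs"
      using not_distinct_decomp by blast
    have w: "wk A (xs @ m # (ys @ m # zs @ [v])) ss" using less.prems(1) vs cs by simp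
    from wk_split[OF w] obtain s1 s' where s1: "ss = s1 @ s'" "wk A (xs @ [m]) s1"
      "wk A (m # ys @ m # zs @ [v]) s'" by blast
    from wk_split[of A "m # ys" m "zs @ [v]" s'] s1(3) obtain s2 s3 where s2:
      "s' = s2 @ s3" "wk A (m # ys @ [m]) s2" "wk A (m # zs @ [v]) s3" by auto
    have w2: "wk A (xs @ m # zs @ [v]) (s1 @ s3)"
      using wk_app[OF s1(2) s2(3)] by simp
    have s2ne: "s2 \<noteq> []" using wk_length[OF s2(2)] by (cases s2) auto
    have s13ne: "s1 @ s3 \<noteq> []" using wk_length[OF s2(3)] by (cases s3) auto
    have hd2: "hd (xs @ m # zs @ [v]) = last (xs @ m # zs @ [v])"
      using hdv cs by (cases xs) auto
    have l1: "length (m # ys @ [m]) < length vs" using vs cs by simp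
    have l2: "length (xs @ m # zs @ [v]) < length vs" using vs cs by simp
    obtain c1 t1 where c1: "cyc A c1 t1" "odd (nneg s2) \<longrightarrow> odd (nneg t1)"
      using less.hyps[OF l1 s2(2) _ s2ne] by auto
    obtain c2 t2 where c2: "cyc A c2 t2" "odd (nneg (s1 @ s3)) \<longrightarrow> odd (nneg t2)"
      using less.hyps[OF l2 w2 hd2 s13ne] by auto
    have "nneg ss = nneg s2 + nneg (s1 @ s3)" using s1 s2 by simp
    then show ?thesis using c1 c2 by (cases "odd (nneg s2)") auto
  qed
qed

lemma good_walk_parity:
  fixes g :: "nat \<Rightarrow> bool"
  shows "wk A vs ss \<Longrightarrow> (\<And>j i s. A j i s \<Longrightarrow> s = (g j = g i)) \<Longrightarrow>
   even (nneg ss) = (g (hd vs) = g (last vs))"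
proof (induction A vs ss rule: wk.induct)
  case (2 A u v vs s ss)
  have s: "s = (g u = g v)" using 2 by auto
  have ih: "even (nneg ss) = (g v = g (last (v # vs)))" using 2 by auto
  have l: "last (u # v # vs) = last (v # vs)" by simp
  show ?case unfolding l using s ih by (cases s) auto
qed auto

lemma good_cyc_pos:
  fixes g :: "nat \<Rightarrow> bool"
  shows "cyc A cs ts \<Longrightarrow> (\<And>j i s. A j i s \<Longrightarrow> s = (g j = g i)) \<Longrightarrow> positive_cycle ts"
proof -
  assume c: "cyc A cs ts" and g: "\<And>j i s. A j i s \<Longrightarrow> s = (g j = g i)"
  have "even (nneg ts) = (g (hd (cs @ [hd cs])) = g (last (cs @ [hd cs])))"
    using good_walk_parity[OF cyc_wk[OF c]] g by blast
  moreover have "cs \<noteq> []" using c unfolding cyc_def by auto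
  ultimately show ?thesis unfolding positive_cycle_def by simp
qed

lemma back_walk:
  assumes "\<And>i. i \<in> D \<Longrightarrow> \<exists>j\<in>D. \<exists>s. A j i s" "i0 \<in> D"
  shows "\<exists>vs ss. wk A vs ss \<and> length vs = Suc k \<and> set vs \<subseteq> D"
proof (induction k)
  case 0
  then show ?case using assms(2) by (intro exI[of _ "[i0]"] exI[of _ "[]"]) auto
next
  case (Suc k)
  then obtain vs ss where v: "wk A vs ss" "length vs = Suc k" "set vs \<subseteq> D" by blast
  then obtain u vs' where vs: "vs = u # vs'" by (cases vs) auto
  have "u \<in> D" using v vs by auto
  then obtain j s where "j \<in> D" "A j u s" using assms(1) by blast
  then show ?case using v vs by (intro exI[of _ "j # vs"] exI[of _ "s # ss"]) (cases vs'; auto)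
qed

lemma all_in_cycle:
  assumes "finite D" "D \<noteq> {}" "\<And>i. i \<in> D \<Longrightarrow> \<exists>j\<in>D. \<exists>s. A j i s"
  shows "\<exists>cs ts. cyc A cs ts"
proof -
  obtain i0 where "i0 \<in> D" using assms(2) by auto
  have "\<exists>vs ss. wk A vs ss \<and> length vs = Suc (card D) \<and> set vs \<subseteq> D"
    by (rule back_walk[of D A i0 "card D"]) (use assms(3) \<open>i0 \<in> D\<close> in auto)
  then obtain vs ss where
    v: "wk A vs ss" "length vs = Suc (card D)" "set vs \<subseteq> D" by blast
  have "\<not> distinct vs"
  proof
    assume "distinct vs"
    then have "card (set vs) = Suc (card D)" using v distinct_card by metis
    moreover have "card (set vs) \<le> card D" using v(3) assms(1) card_mono by blast
    ultimately show False by simp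
  qed
  then obtain xs ys zs m where "vs = xs @ [m] @ ys @ [m] @ zs"
    using not_distinct_decomp by blast
  then have w: "wk A (xs @ m # (ys @ m # zs)) ss" using v by simp
  from wk_split[OF w] obtain s1 s' where "wk A (m # ys @ m # zs) s'" by blast
  from wk_split[of A "m # ys" m zs s'] this obtain s2 where s2: "wk A (m # ys @ [m]) s2" by auto
  moreover have "s2 \<noteq> []" using wk_length[OF s2] by (cases s2) auto
  ultimately show ?thesis using closed_walk_cycle[of A "m # ys @ [m]" s2] by auto
qed

definition fixp :: "(config \<Rightarrow> config) \<Rightarrow> nat set \<Rightarrow> config \<Rightarrow> bool" where
  "fixp f V x \<longleftrightarrow> (\<forall>i\<in>V. f x i = x i)"

definition predclosed :: "(config \<Rightarrow> config) \<Rightarrow> nat set \<Rightarrow> config \<Rightarrow> nat set \<Rightarrow> bool" where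
  "predclosed f V b R \<longleftrightarrow> (\<forall>j\<in>V. \<forall>i\<in>R. \<forall>s. garc f V b j i s \<longrightarrow> j \<in> R)"

definition complete :: "nat set \<Rightarrow> nat list \<Rightarrow> bool" where
  "complete V w \<longleftrightarrow> (\<forall>p. distinct p \<and> set p = V \<longrightarrow> subseq p w)"

lemma flip:
  fixes g :: "config \<Rightarrow> bool"
  assumes "finite {k. x k \<noteq> y k}" "g x \<noteq> g y"
  shows "\<exists>u j. x j \<noteq> y j \<and> (\<forall>k. u k = x k \<or> u k = y k) \<and> u j = x j \<and> g u = g x \<and> g (u(j := y j)) = g y"
  using assms
proof (induction "card {k. x k \<noteq> y k}" arbitrary: x rule: less_induct)
  case less
  have "x \<noteq> y" using less.prems(2) by auto
  then obtain j0 where j0: "x j0 \<noteq> y j0" by auto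
  define x' where "x' = x(j0 := y j0)"
  show ?case
  proof (cases "g x' = g x")
    case False
    then have "g x' = g y" using less.prems(2) by auto
    then show ?thesis using j0 unfolding x'_def by (intro exI[of _ x] exI[of _ j0]) auto
  next
    case True
    have sub: "{k. x' k \<noteq> y k} = {k. x k \<noteq> y k} - {j0}" unfolding x'_def by auto
    have "card {k. x' k \<noteq> y k} < card {k. x k \<noteq> y k}"
      unfolding sub by (rule card_Diff1_less) (use less.prems(1) j0 in auto)
    moreover have "finite {k. x' k \<noteq> y k}" unfolding sub using less.prems(1) by simp
    moreover have "g x' \<noteq> g y" using True less.prems(2) by simp
    ultimately obtain u j where u: "x' j \<noteq> y j" "\<forall>k. u k = x' k \<or> u k = y k" "u j = x' j"
      "g u = g x'" "g (u(j := y j)) = g y" using less.hyps by blast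
    have jj: "j \<noteq> j0" using u(1) unfolding x'_def by auto
    then have xj: "x' j = x j" unfolding x'_def by simp
    have "\<forall>k. u k = x k \<or> u k = y k"
    proof
      fix k show "u k = x k \<or> u k = y k"
        using u(2)[rule_format, of k] unfolding x'_def by (cases "k = j0") auto
    qed
    then show ?thesis using u True xj
      by (intro exI[of _ u] exI[of _ j]) simp
  qed
qed

lemma XX_finite_diff: "finite V \<Longrightarrow> x \<in> XX V b \<Longrightarrow> y \<in> XX V b \<Longrightarrow> finite {k. x k \<noteq> y k}"
  unfolding XX_def by (rule finite_subset[of _ V]) auto

lemma XX_upd: "x \<in> XX V b \<Longrightarrow> j \<in> V \<Longrightarrow> x(j := c) \<in> XX V b"
  unfolding XX_def by auto

lemma flipX:
  fixes g :: "config \<Rightarrow> bool"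
  assumes "finite V" "x \<in> XX V b" "y \<in> XX V b" "g x \<noteq> g y"
  shows "\<exists>u j. j \<in> V \<and> x j \<noteq> y j \<and> u \<in> XX V b \<and> u j = x j \<and> g u = g x \<and> g (u(j := \<not> u j)) = g y"
proof -
  obtain u j where u: "x j \<noteq> y j" "\<forall>k. u k = x k \<or> u k = y k" "u j = x j" "g u = g x" "g (u(j := y j)) = g y"
    using flip[OF XX_finite_diff[OF assms(1-3)] assms(4)] by blast
  have "j \<in> V" using u(1) assms(2,3) unfolding XX_def by auto
  moreover have "u \<in> XX V b" unfolding XX_def
  proof (intro CollectI allI impI)
    fix i assume "i \<notin> V"
    then show "u i = b i" using u(2)[rule_format, of i] assms(2,3) unfolding XX_def by auto
  qed
  moreover have "y j = (\<not> u j)" using u(1,3) by auto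
  then have "u(j := \<not> u j) = u(j := y j)" by simp
  ultimately show ?thesis using u by (intro exI[of _ u] exI[of _ j]) simp
qed

lemma arc_of_flip:
  assumes "u \<in> XX V b" "j \<in> V" "i \<in> V" "f u i \<noteq> f (u(j := \<not> u j)) i"
  shows "garc f V b j i (f (u(j := True)) i)"
proof -
  define lo where "lo = u(j := False)"
  have lo: "lo \<in> XX V b" "\<not> lo j" "lo(j := True) = u(j := True)"
    unfolding lo_def using XX_upd[OF assms(1,2)] by auto
  have "f lo i \<noteq> f (u(j := True)) i"
  proof (cases "u j")
    case True
    then have "u(j := \<not> u j) = lo" "u(j := True) = u" unfolding lo_def by (auto simp: fun_eq_iff)
    then show ?thesis using assms(4) by metis
  next
    case False
    then have "u(j := \<not> u j) = u(j := True)" "lo = u" unfolding lo_def by (auto simp: fun_eq_iff)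
    then show ?thesis using assms(4) by metis
  qed
  then show ?thesis unfolding garc_def using assms(2,3) lo
    by (intro conjI bexI[of _ lo]) auto
qed

lemma indep:
  assumes "finite V" "i \<in> V" "\<forall>j\<in>V - R. \<forall>s. \<not> garc f V b j i s"
    "x \<in> XX V b" "y \<in> XX V b" "\<forall>k\<in>R. x k = y k"
  shows "f x i = f y i"
proof (rule ccontr)
  assume "f x i \<noteq> f y i"
  then obtain u j where u: "j \<in> V" "x j \<noteq> y j" "u \<in> XX V b" "u j = x j" "f u i = f x i"
    "f (u(j := \<not> u j)) i = f y i"
    using flipX[OF assms(1,4,5), of "\<lambda>z. f z i"] by blast
  have "f u i \<noteq> f (u(j := \<not> u j)) i" using u(5,6) \<open>f x i \<noteq> f y i\<close> by simp
  then have "garc f V b j i (f (u(j := True)) i)"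
    using arc_of_flip[OF u(3,1) assms(2)] by blast
  moreover have "j \<notin> R" using u(2) assms(6) by auto
  ultimately show False using assms(3) u(1) by auto
qed

lemma indep_pc:
  assumes "finite V" "R \<subseteq> V" "predclosed f V b R" "i \<in> R"
    "x \<in> XX V b" "y \<in> XX V b" "\<forall>k\<in>R. x k = y k"
  shows "f x i = f y i"
  using indep[OF assms(1) _ _ assms(5-7)] assms(2-4) unfolding predclosed_def by blast

lemma wu_append: "word_update f (u @ v) x = word_update f v (word_update f u x)"
  by (induction u arbitrary: x) auto

lemma wu_X: "x \<in> XX V b \<Longrightarrow> set w \<subseteq> V \<Longrightarrow> word_update f w x \<in> XX V b"
  by (induction w arbitrary: x) (auto simp: async_update_def XX_upd)

lemma wu_fp: "fixp f V z \<Longrightarrow> set w \<subseteq> V \<Longrightarrow> word_update f w z = z"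
  by (induction w) (auto simp: async_update_def fixp_def)

lemma XX_sub: "S \<subseteq> V \<Longrightarrow> z \<in> XX V b \<Longrightarrow> XX S z \<subseteq> XX V b"
  unfolding XX_def by auto

lemma garc_sub: "S \<subseteq> V \<Longrightarrow> z \<in> XX V b \<Longrightarrow> garc f S z j i s \<Longrightarrow> garc f V b j i s"
  unfolding garc_def using XX_sub by blast

lemma cyc_sub: "S \<subseteq> V \<Longrightarrow> z \<in> XX V b \<Longrightarrow> cyc (garc f S z) cs ts \<Longrightarrow> cyc (garc f V b) cs ts"
  using cyc_mono garc_sub by metis

lemma complete_filter: "complete V w \<Longrightarrow> V \<subseteq> {i. P i} \<Longrightarrow> complete V (filter P w)"
  unfolding complete_def
proof (intro allI impI)
  fix p assume "\<forall>p. distinct p \<and> set p = V \<longrightarrow> subseq p w" "V \<subseteq> {i. P i}" "distinct p \<and> set p = V"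
  then have "subseq (filter P p) (filter P w)" "filter P p = p" by (auto simp: filter_id_conv)
  then show "subseq p (filter P w)" by simp
qed

lemma complete_pre: "complete V w \<Longrightarrow> complete V (v @ w)"
  unfolding complete_def by auto

lemma complete_subset: "finite V \<Longrightarrow> R \<subseteq> V \<Longrightarrow> complete V w \<Longrightarrow> complete R w"
  unfolding complete_def
proof (intro allI impI)
  fix p assume a: "finite V" "R \<subseteq> V" "\<forall>p. distinct p \<and> set p = V \<longrightarrow> subseq p w" "distinct p \<and> set p = R"
  define q where "q = sorted_list_of_set (V - R)"
  have "distinct (p @ q) \<and> set (p @ q) = V" using a unfolding q_def by auto
  then have "subseq (p @ q) w" using a by auto
  then show "subseq p w" using list_emb_appendD by fastforce
qed

lemma complete_Nil: "finite R \<Longrightarrow> complete R [] \<Longrightarrow> R = {}"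
proof (rule ccontr)
  assume a: "finite R" "complete R []" "R \<noteq> {}"
  define p where "p = sorted_list_of_set R"
  have "distinct p \<and> set p = R" using a(1) unfolding p_def by simp
  then have "subseq p []" using a(2) unfolding complete_def by blast
  then have "p = []" by simp
  then show False using a(1,3) \<open>distinct p \<and> set p = R\<close> by simp
qed

lemma complete_split:
  assumes "finite V" "R \<subseteq> V" "complete V w"
  shows "\<exists>w1 w2. w = w1 @ w2 \<and> complete R w1 \<and> complete (V - R) w2"
proof -
  have ex: "\<exists>k. complete R (take k w)"
    using complete_subset[OF assms] by (intro exI[of _ "length w"]) simp
  define k where "k = (LEAST k. complete R (take k w))"
  have ck: "complete R (take k w)" unfolding k_def by (rule LeastI_ex[OF ex])
  show ?thesis
  proof (cases k)
    case 0
    then have "R = {}" using ck complete_Nil assms(1,2) finite_subset by auto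
    then show ?thesis using assms(3) ck 0 by (intro exI[of _ "[]"] exI[of _ w]) auto
  next
    case (Suc k')
    then have "\<not> complete R (take k' w)" unfolding k_def using not_less_Least by (metis lessI)
    then obtain p where p: "distinct p" "set p = R" "\<not> subseq p (take k' w)"
      unfolding complete_def by blast
    have "complete (V - R) (drop k w)"
      unfolding complete_def
    proof (intro allI impI)
      fix q assume q: "distinct q \<and> set q = V - R"
      then have "distinct (p @ q) \<and> set (p @ q) = V" using p assms(2) by auto
      then have "subseq (p @ q) w" using assms(3) unfolding complete_def by auto
      then obtain us vs where uv: "w = us @ vs" "subseq p us" "subseq q vs"
        using list_emb_appendD by blast
      have "length us > k'"
      proof (rule ccontr)
        assume "\<not> length us > k'"
        then have "take k' w = us @ take (k' - length us) vs" using uv(1) by simp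
        then have "subseq us (take k' w)" by (simp add: list_emb_prefix)
        then show False using uv(2) p(3) subseq_order.trans by blast
      qed
      then have "length us \<ge> k" using Suc by simp
      then have "drop k w = drop k us @ vs" using uv(1) by simp
      then have "subseq vs (drop k w)" by (metis list_emb_append2 subseq_order.refl)
      then show "subseq q (drop k w)" using uv(3) subseq_order.trans by blast
    qed
    then show ?thesis using ck by (intro exI[of _ "take k w"] exI[of _ "drop k w"]) auto
  qed
qed

lemma complete_decomp:
  assumes "finite V" "i \<in> V" "complete V w"
  shows "\<exists>u w'. w = u @ i # w' \<and> complete (V - {i}) w'"
proof -
  obtain w1 w2 where w: "w = w1 @ w2" "complete {i} w1" "complete (V - {i}) w2"
    using complete_split[OF assms(1) _ assms(3), of "{i}"] assms(2) by auto
  have "subseq [i] w1" using w(2) unfolding complete_def by auto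
  then have "i \<in> set w1" by (simp add: subseq_singleton_left)
  then obtain u v where "w1 = u @ i # v" by (meson split_list)
  then show ?thesis using w complete_pre[OF w(3), of v] by (intro exI[of _ u] exI[of _ "v @ w2"]) auto
qed

definition balanced :: "(config \<Rightarrow> config) \<Rightarrow> nat set \<Rightarrow> config \<Rightarrow> (nat \<Rightarrow> bool) \<Rightarrow> bool" where
  "balanced f V b \<sigma> \<longleftrightarrow> (\<forall>j i s. garc f V b j i s \<longrightarrow> s = (\<sigma> j = \<sigma> i))"

definition le :: "(nat \<Rightarrow> bool) \<Rightarrow> nat set \<Rightarrow> config \<Rightarrow> config \<Rightarrow> bool" where
  "le \<sigma> V x y \<longleftrightarrow> (\<forall>i\<in>V. x i \<noteq> \<sigma> i \<longrightarrow> y i \<noteq> \<sigma> i)"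

definition subp :: "(config \<Rightarrow> config) \<Rightarrow> (nat \<Rightarrow> bool) \<Rightarrow> nat set \<Rightarrow> config \<Rightarrow> bool" where
  "subp f \<sigma> V x \<longleftrightarrow> (\<forall>i\<in>V. x i \<noteq> \<sigma> i \<longrightarrow> f x i \<noteq> \<sigma> i)"

lemma sle_trans: "le \<sigma> V x y \<Longrightarrow> le \<sigma> V y z \<Longrightarrow> le \<sigma> V x z"
  unfolding le_def by blast

lemma sle_antisym: "le \<sigma> V x y \<Longrightarrow> le \<sigma> V y x \<Longrightarrow> x \<in> XX V b \<Longrightarrow> y \<in> XX V b \<Longrightarrow> x = y"
proof (rule ext)
  fix k assume a: "le \<sigma> V x y" "le \<sigma> V y x" "x \<in> XX V b" "y \<in> XX V b"
  show "x k = y k"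
  proof (cases "k \<in> V")
    case True
    then have "x k \<noteq> \<sigma> k \<longrightarrow> y k \<noteq> \<sigma> k" "y k \<noteq> \<sigma> k \<longrightarrow> x k \<noteq> \<sigma> k"
      using a unfolding le_def by auto
    then show ?thesis by (cases "x k"; cases "\<sigma> k"; cases "y k"; simp)
  next
    case False
    then show ?thesis using a(3,4) unfolding XX_def by auto
  qed
qed

lemma sle_refl: "le \<sigma> V x x"
  unfolding le_def by blast

lemma mono_f:
  assumes "finite V" "balanced f V b \<sigma>" "x \<in> XX V b" "y \<in> XX V b" "le \<sigma> V x y" "i \<in> V"
    "f x i \<noteq> \<sigma> i"
  shows "f y i \<noteq> \<sigma> i"
proof (rule ccontr)
  assume c: "\<not> f y i \<noteq> \<sigma> i"
  then have "f x i \<noteq> f y i" using assms(7) by auto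
  then obtain u j where u: "j \<in> V" "x j \<noteq> y j" "u \<in> XX V b" "u j = x j" "f u i = f x i"
    "f (u(j := \<not> u j)) i = f y i"
    using flipX[OF assms(1,3,4), of "\<lambda>z. f z i"] by blast
  have xj: "x j = \<sigma> j" using assms(5) u(1,2) unfolding le_def by auto
  have ne: "f u i \<noteq> f (u(j := \<not> u j)) i" using u(5,6) \<open>f x i \<noteq> f y i\<close> by simp
  have g: "f (u(j := True)) i = (\<sigma> j = \<sigma> i)"
    using arc_of_flip[of u V b j i f, OF u(3,1) assms(6) ne] assms(2) unfolding balanced_def by blast
  show False
  proof (cases "\<sigma> j")
    case True
    then have "u(j := True) = u" using xj u(4) by (auto simp: fun_eq_iff)
    then show False using g u(5) assms(7) True by auto
  next
    case False
    then have "u(j := True) = u(j := \<not> u j)" using xj u(4) by auto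
    then show False using g u(6) c False by auto
  qed
qed

lemma mono_async:
  assumes "finite V" "balanced f V b \<sigma>" "x \<in> XX V b" "y \<in> XX V b" "le \<sigma> V x y" "i \<in> V"
  shows "le \<sigma> V (async_update f i x) (async_update f i y)"
  using assms mono_f[OF assms(1-5)] unfolding le_def async_update_def by auto

lemma mono_wu:
  assumes "finite V" "balanced f V b \<sigma>" "x \<in> XX V b" "y \<in> XX V b" "le \<sigma> V x y" "set w \<subseteq> V"
  shows "le \<sigma> V (word_update f w x) (word_update f w y)"
  using assms(3-6)
proof (induction w arbitrary: x y)
  case (Cons i w)
  have "le \<sigma> V (async_update f i x) (async_update f i y)"
    using mono_async[OF assms(1,2) Cons.prems(1-3)] Cons.prems(4) by auto
  moreover have "async_update f i x \<in> XX V b" "async_update f i y \<in> XX V b"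
    using Cons.prems unfolding async_update_def by (auto intro: XX_upd)
  ultimately show ?case using Cons by auto
qed simp

lemma subp_async:
  assumes "finite V" "balanced f V b \<sigma>" "x \<in> XX V b" "subp f \<sigma> V x" "i \<in> V"
  shows "subp f \<sigma> V (async_update f i x) \<and> le \<sigma> V x (async_update f i x)"
proof -
  define y where "y = async_update f i x"
  have y: "y \<in> XX V b" unfolding y_def async_update_def using assms(3,5) by (rule XX_upd)
  have lxy: "le \<sigma> V x y" using assms(4) unfolding le_def subp_def y_def async_update_def by auto
  have "subp f \<sigma> V y"
    unfolding subp_def
  proof (intro ballI impI)
    fix k assume k: "k \<in> V" "y k \<noteq> \<sigma> k"
    show "f y k \<noteq> \<sigma> k"
    proof (cases "k = i")
      case True
      then have "f x k \<noteq> \<sigma> k" using k unfolding y_def async_update_def by auto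
      then show ?thesis using mono_f[OF assms(1,2,3) y lxy k(1)] by blast
    next
      case False
      then have "x k \<noteq> \<sigma> k" using k unfolding y_def async_update_def by auto
      then have "f x k \<noteq> \<sigma> k" using assms(4) k unfolding subp_def by auto
      then show ?thesis using mono_f[OF assms(1,2,3) y lxy k(1)] by blast
    qed
  qed
  then show ?thesis using lxy unfolding y_def by auto
qed

lemma subp_wu:
  assumes "finite V" "balanced f V b \<sigma>" "x \<in> XX V b" "subp f \<sigma> V x" "set w \<subseteq> V"
  shows "subp f \<sigma> V (word_update f w x) \<and> le \<sigma> V x (word_update f w x)"
  using assms(3-5)
proof (induction w arbitrary: x)
  case Nil
  then show ?case by (simp add: sle_refl)
next
  case (Cons i w)
  have a: "subp f \<sigma> V (async_update f i x) \<and> le \<sigma> V x (async_update f i x)"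
    using subp_async[OF assms(1,2) Cons.prems(1,2)] Cons.prems(3) by auto
  have "async_update f i x \<in> XX V b"
    using Cons.prems unfolding async_update_def by (auto intro: XX_upd)
  then show ?case using Cons.IH[of "async_update f i x"] a Cons.prems(3) sle_trans by auto
qed

lemma sync_subp:
  assumes "finite V" "balanced f V b \<sigma>" "z \<in> XX V b" "fixp f V z"
    "\<forall>y\<in>XX V b. fixp f V y \<longrightarrow> y = z"
  shows "W \<subseteq> V \<Longrightarrow> y \<in> XX V b \<Longrightarrow> subp f \<sigma> V y \<Longrightarrow> le \<sigma> V y z \<Longrightarrow> (\<forall>j\<in>W. y j = z j) \<Longrightarrow>
    set w \<subseteq> V \<Longrightarrow> complete (V - W) w \<Longrightarrow> word_update f w y = z"
proof (induction "card (V - W)" arbitrary: W y w rule: less_induct)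
  case less
  show ?case
  proof (cases "fixp f V y")
    case True
    then have "y = z" using assms(5) less.prems(2) by auto
    then show ?thesis using wu_fp[OF assms(4) less.prems(6)] by simp
  next
    case False
    then obtain i where i: "i \<in> V" "f y i \<noteq> y i" unfolding fixp_def by auto
    have yi: "y i = \<sigma> i" "f y i \<noteq> \<sigma> i" using less.prems(3) i unfolding subp_def by auto
    have zi: "z i \<noteq> \<sigma> i" using mono_f[OF assms(1,2) less.prems(2) assms(3) less.prems(4) i(1) yi(2)]
      assms(4) i(1) unfolding fixp_def by auto
    have iW: "i \<notin> W" using less.prems(5) yi zi by auto
    obtain u w' where uw: "w = u @ i # w'" "complete (V - W - {i}) w'"
      using complete_decomp[of "V - W" i w] less.prems(7) i(1) iW assms(1) by auto
    define y1 where "y1 = word_update f u y"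
    have su: "set u \<subseteq> V" "set w' \<subseteq> V" using less.prems(6) uw(1) by auto
    have y1: "y1 \<in> XX V b" "subp f \<sigma> V y1" "le \<sigma> V y y1"
      using subp_wu[OF assms(1,2) less.prems(2,3) su(1)] wu_X[OF less.prems(2) su(1)]
      unfolding y1_def by auto
    have y1z: "le \<sigma> V y1 z" using mono_wu[OF assms(1,2) less.prems(2) assms(3) less.prems(4) su(1)]
      wu_fp[OF assms(4) su(1)] unfolding y1_def by simp
    define y2 where "y2 = async_update f i y1"
    have y2: "y2 \<in> XX V b" "subp f \<sigma> V y2" "le \<sigma> V y1 y2"
      using subp_async[OF assms(1,2) y1(1,2) i(1)] XX_upd[OF y1(1) i(1)]
      unfolding y2_def async_update_def by auto
    have az: "async_update f i z = z" using assms(4) i(1) unfolding fixp_def async_update_def by simp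
    have y2z: "le \<sigma> V y2 z"
      using mono_async[OF assms(1,2) y1(1) assms(3) y1z i(1)] unfolding y2_def az .
    have "f y1 i \<noteq> \<sigma> i" using mono_f[OF assms(1,2) less.prems(2) y1(1) y1(3) i(1) yi(2)] .
    then have y2i: "y2 i = z i" using zi unfolding y2_def async_update_def by auto
    have y2W: "\<forall>j\<in>W \<union> {i}. y2 j = z j"
    proof
      fix j assume j: "j \<in> W \<union> {i}"
      show "y2 j = z j"
      proof (cases "j = i")
        case True then show ?thesis using y2i by simp
      next
        case False
        then have jW: "j \<in> W" "j \<in> V" using j less.prems(1) by auto
        have "le \<sigma> V y y2" using sle_trans[OF y1(3) y2(3)] .
        then have "y j \<noteq> \<sigma> j \<longrightarrow> y2 j \<noteq> \<sigma> j" "y2 j \<noteq> \<sigma> j \<longrightarrow> z j \<noteq> \<sigma> j" "y j = z j"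
          using y2z less.prems(5) jW unfolding le_def by auto
        then show ?thesis by (cases "y j"; cases "\<sigma> j"; cases "y2 j"; simp)
      qed
    qed
    have eqd: "V - (W \<union> {i}) = V - W - {i}" by auto
    have "card (V - W - {i}) < card (V - W)"
      by (rule card_Diff1_less) (use assms(1) i(1) iW in auto)
    then have card: "card (V - (W \<union> {i})) < card (V - W)" unfolding eqd .
    have "V - (W \<union> {i}) = V - W - {i}" by auto
    then have "word_update f w' y2 = z"
      using less.hyps[OF card, where y=y2 and w=w'] less.prems(1) i(1) y2 y2z y2W su(2) uw(2) by auto
    then show ?thesis unfolding uw(1) wu_append y1_def[symmetric] by (simp add: y2_def)
  qed
qed

lemma bot_subp:
  "subp f \<sigma> V (\<lambda>k. if k \<in> V then \<sigma> k else b k)" "(\<lambda>k. if k \<in> V then \<sigma> k else b k) \<in> XX V b"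
  "\<And>x. le \<sigma> V (\<lambda>k. if k \<in> V then \<sigma> k else b k) x"
  unfolding subp_def XX_def le_def by auto

lemma le_neg: "le (\<lambda>k. \<not> \<sigma> k) V x y = le \<sigma> V y x"
  unfolding le_def by auto

lemma balanced_neg: "balanced f V b \<sigma> \<Longrightarrow> balanced f V b (\<lambda>k. \<not> \<sigma> k)"
  unfolding balanced_def by auto

lemma sync_balanced:
  assumes "finite V" "balanced f V b \<sigma>" "z \<in> XX V b" "fixp f V z"
    "\<forall>y\<in>XX V b. fixp f V y \<longrightarrow> y = z" "set w \<subseteq> V" "complete V w" "x \<in> XX V b"
  shows "word_update f w x = z"
proof -
  have sync: "word_update f w (\<lambda>k. if k \<in> V then \<tau> k else b k) = z" if bt: "balanced f V b \<tau>" for \<tau>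
  proof -
    have "le \<tau> V (\<lambda>k. if k \<in> V then \<tau> k else b k) z" by (rule bot_subp)
    then show ?thesis
      using sync_subp[OF assms(1) bt assms(3,4,5), of "{}" "\<lambda>k. if k \<in> V then \<tau> k else b k" w]
        bot_subp assms(6,7) by auto
  qed
  have l1: "le \<sigma> V z (word_update f w x)"
    using mono_wu[OF assms(1,2) bot_subp(2) assms(8) bot_subp(3) assms(6)] sync[OF assms(2)] by simp
  have l2: "le \<sigma> V (word_update f w x) z"
    using mono_wu[OF assms(1) balanced_neg[OF assms(2)] bot_subp(2) assms(8) bot_subp(3) assms(6)]
      sync[OF balanced_neg[OF assms(2)]] le_neg by metis
  have "word_update f w x \<in> XX V b" using wu_X[OF assms(8,6)] .
  then show ?thesis using sle_antisym[OF l2 l1 _ assms(3)] by blast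
qed

lemma exists_balanced:
  assumes "finite V" "balanced f V b \<sigma>"
  shows "\<exists>z\<in>XX V b. fixp f V z"
proof -
  have "\<exists>z\<in>XX V b. fixp f V z" if "y \<in> XX V b" "subp f \<sigma> V y" for y
    using that
  proof (induction "card {i\<in>V. y i = \<sigma> i}" arbitrary: y rule: less_induct)
    case less
    show ?case
    proof (cases "fixp f V y")
      case True then show ?thesis using less.prems by auto
    next
      case False
      then obtain i where i: "i \<in> V" "f y i \<noteq> y i" unfolding fixp_def by auto
      have yi: "y i = \<sigma> i" "f y i \<noteq> \<sigma> i" using less.prems(2) i unfolding subp_def by auto
      define y' where "y' = async_update f i y"
      have y': "y' \<in> XX V b" "subp f \<sigma> V y'"
        using subp_async[OF assms less.prems i(1)] XX_upd[OF less.prems(1) i(1)]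
        unfolding y'_def async_update_def by auto
      have "{k\<in>V. y' k = \<sigma> k} = {k\<in>V. y k = \<sigma> k} - {i}"
        using yi unfolding y'_def async_update_def by auto
      moreover have "card ({k\<in>V. y k = \<sigma> k} - {i}) < card {k\<in>V. y k = \<sigma> k}"
        by (rule card_Diff1_less) (use assms(1) i(1) yi(1) in auto)
      ultimately have "card {k\<in>V. y' k = \<sigma> k} < card {k\<in>V. y k = \<sigma> k}" by simp
      then show ?thesis using less.hyps y' by blast
    qed
  qed
  then show ?thesis using bot_subp by blast
qed

definition allpos :: "(config \<Rightarrow> config) \<Rightarrow> nat set \<Rightarrow> config \<Rightarrow> bool" where
  "allpos f V b \<longleftrightarrow> (\<forall>cs ts. cyc (garc f V b) cs ts \<longrightarrow> positive_cycle ts)"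

definition allneg :: "(config \<Rightarrow> config) \<Rightarrow> nat set \<Rightarrow> config \<Rightarrow> bool" where
  "allneg f V b \<longleftrightarrow> (\<forall>cs ts. cyc (garc f V b) cs ts \<longrightarrow> \<not> positive_cycle ts)"

definition SC :: "(config \<Rightarrow> config) \<Rightarrow> nat set \<Rightarrow> config \<Rightarrow> bool" where
  "SC f V b \<longleftrightarrow> (\<forall>R. R \<subseteq> V \<longrightarrow> R \<noteq> {} \<longrightarrow> predclosed f V b R \<longrightarrow> R = V)"

lemma garc_in: "garc f V b j i s \<Longrightarrow> j \<in> V \<and> i \<in> V"
  unfolding garc_def by auto

lemma closed_even:
  assumes "allpos f V b" "wk (garc f V b) vs ss" "hd vs = last vs"
  shows "even (nneg ss)"
proof (rule ccontr)
  assume o: "\<not> even (nneg ss)"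
  then have "ss \<noteq> []" by auto
  then obtain cs ts where "cyc (garc f V b) cs ts" "odd (nneg ts)"
    using closed_walk_cycle[OF assms(2,3)] o by blast
  then show False using assms(1) unfolding allpos_def positive_cycle_def by blast
qed

lemma wk_app_hl:
  assumes "wk A vs1 ss1" "wk A vs2 ss2" "last vs1 = hd vs2"
  shows "wk A (vs1 @ tl vs2) (ss1 @ ss2) \<and> hd (vs1 @ tl vs2) = hd vs1 \<and> last (vs1 @ tl vs2) = last vs2"
proof -
  have n1: "vs1 \<noteq> []" using wk_nonempty[OF assms(1)] .
  have n2: "vs2 \<noteq> []" using wk_nonempty[OF assms(2)] .
  then obtain h t where vs2: "vs2 = h # t" by (cases vs2) auto
  have l: "last (vs1 @ tl vs2) = last vs2"
    using assms(3) n1 vs2 by (cases "t = []") auto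
  have h: "hd (vs1 @ tl vs2) = hd vs1" using n1 by simp
  show ?thesis using wk_app[OF assms] l h by blast
qed

lemma wk_arc: "wk A vs ss \<Longrightarrow> A (last vs) i s \<Longrightarrow> wk A (vs @ [i]) (ss @ [s]) \<and> hd (vs @ [i]) = hd vs \<and> last (vs @ [i]) = i"
proof -
  assume a: "wk A vs ss" "A (last vs) i s"
  have "wk A [last vs, i] [s]" using a(2) by simp
  from wk_app_hl[OF a(1) this] show ?thesis by simp
qed

lemma wk_last_in0: "wk A vs ss \<Longrightarrow> (\<forall>j i s. A j i s \<longrightarrow> i \<in> V) \<Longrightarrow> hd vs \<in> V \<Longrightarrow> last vs \<in> V"
proof (induction A vs ss rule: wk.induct)
  case (2 A u v vs s ss)
  have "A u v s" using 2(2) by simp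
  then have "v \<in> V" using 2(3) by blast
  then show ?case using 2 by simp
qed auto

lemma wk_last_in: "wk (garc f V b) vs ss \<Longrightarrow> hd vs \<in> V \<Longrightarrow> last vs \<in> V"
  using wk_last_in0[of "garc f V b" vs ss V] garc_in[of f V b] by blast

lemma sc_balanced:
  assumes "finite V" "V \<noteq> {}" "SC f V b" "allpos f V b"
  shows "\<exists>\<sigma>. balanced f V b \<sigma>"
proof -
  let ?A = "garc f V b"
  obtain r where r: "r \<in> V" using assms(2) by auto
  have to_r: "\<forall>v\<in>V. \<exists>vs ss. wk ?A vs ss \<and> hd vs = v \<and> last vs = r"
  proof -
    let ?R = "{v\<in>V. \<exists>vs ss. wk ?A vs ss \<and> hd vs = v \<and> last vs = r}"
    have "r \<in> ?R" using r by (intro CollectI conjI exI[of _ "[r]"] exI[of _ "[]"]) auto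
    moreover have "predclosed f V b ?R" unfolding predclosed_def
    proof (intro ballI allI impI)
      fix j i s assume a: "j \<in> V" "i \<in> ?R" "garc f V b j i s"
      then obtain vs ss where w: "wk ?A vs ss" "hd vs = i" "last vs = r" by auto
      then obtain t where "vs = i # t" using wk_nonempty by (cases vs) auto
      then have "wk ?A (j # vs) (s # ss) \<and> hd (j # vs) = j \<and> last (j # vs) = r"
        using w a(3) by auto
      then show "j \<in> ?R" using a(1) by blast
    qed
    moreover have "?R \<subseteq> V" by blast
    ultimately have eq: "?R = V" using assms(3)[unfolded SC_def, rule_format, of ?R] by blast
    show ?thesis
    proof
      fix v assume "v \<in> V"
      then have "v \<in> ?R" unfolding eq .
      then show "\<exists>vs ss. wk ?A vs ss \<and> hd vs = v \<and> last vs = r" by simp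
    qed
  qed
  have from_r: "\<forall>v\<in>V. \<exists>vs ss. wk ?A vs ss \<and> hd vs = r \<and> last vs = v"
  proof -
    let ?R = "{v\<in>V. \<not> (\<exists>vs ss. wk ?A vs ss \<and> hd vs = r \<and> last vs = v)}"
    have "predclosed f V b ?R" unfolding predclosed_def
    proof (intro ballI allI impI)
      fix j i s assume a: "j \<in> V" "i \<in> ?R" "garc f V b j i s"
      show "j \<in> ?R"
      proof (rule ccontr)
        assume "j \<notin> ?R"
        then have "\<exists>vs ss. wk ?A vs ss \<and> hd vs = r \<and> last vs = j" using a(1) by blast
        then obtain vs ss where w: "wk ?A vs ss" "hd vs = r" "last vs = j" by blast
        then have "wk ?A (vs @ [i]) (ss @ [s]) \<and> hd (vs @ [i]) = r \<and> last (vs @ [i]) = i"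
          using wk_arc[of ?A vs ss i s] a(3) w by simp
        then show False using a(2) by blast
      qed
    qed
    note pc = this
    have "wk ?A [r] [] \<and> hd [r] = r \<and> last [r] = r" by simp
    then have rR: "r \<notin> ?R" by blast
    have eq: "?R = {}"
    proof (rule ccontr)
      assume "?R \<noteq> {}"
      moreover have "?R \<subseteq> V" by blast
      ultimately have "?R = V" using assms(3)[unfolded SC_def, rule_format, of ?R] pc by blast
      then show False using rR r by blast
    qed
    show ?thesis
    proof
      fix v assume "v \<in> V"
      then have "v \<notin> ?R" unfolding eq by simp
      then show "\<exists>vs ss. wk ?A vs ss \<and> hd vs = r \<and> last vs = v" using \<open>v \<in> V\<close> by blast
    qed
  qed
  have uniq: "even (nneg ss1) = even (nneg ss2)"
    if "wk ?A vs1 ss1" "hd vs1 = r" "last vs1 = v" "wk ?A vs2 ss2" "hd vs2 = r" "last vs2 = v" for vs1 ss1 vs2 ss2 v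
  proof -
    have "v \<in> V" using wk_last_in[OF that(1)] that(2,3) r by simp
    then obtain vt st where t: "wk ?A vt st" "hd vt = v" "last vt = r" using to_r by blast
    have l1: "last vs1 = hd vt" using that(3) t(2) by simp
    have "wk ?A (vs1 @ tl vt) (ss1 @ st)" "hd (vs1 @ tl vt) = last (vs1 @ tl vt)"
      using wk_app_hl[OF that(1) t(1) l1] that(2) t(3) by simp_all
    then have c1: "even (nneg (ss1 @ st))" by (rule closed_even[OF assms(4)])
    have l2: "last vs2 = hd vt" using that(6) t(2) by simp
    have "wk ?A (vs2 @ tl vt) (ss2 @ st)" "hd (vs2 @ tl vt) = last (vs2 @ tl vt)"
      using wk_app_hl[OF that(4) t(1) l2] that(5) t(3) by simp_all
    then have c2: "even (nneg (ss2 @ st))" by (rule closed_even[OF assms(4)])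
    show ?thesis using c1 c2 by (simp add: even_add)
  qed
  define \<sigma> where "\<sigma> v = (\<exists>vs ss. wk ?A vs ss \<and> hd vs = r \<and> last vs = v \<and> even (nneg ss))" for v
  have sig: "\<sigma> v = even (nneg ss)" if "wk ?A vs ss" "hd vs = r" "last vs = v" for vs ss v
  proof
    assume "\<sigma> v"
    then obtain vs' ss' where w': "wk ?A vs' ss'" "hd vs' = r" "last vs' = v" "even (nneg ss')"
      unfolding \<sigma>_def by blast
    show "even (nneg ss)" using uniq[OF w'(1-3) that] w'(4) by simp
  next
    assume "even (nneg ss)"
    then show "\<sigma> v" unfolding \<sigma>_def using that by blast
  qed
  have "balanced f V b \<sigma>" unfolding balanced_def
  proof (intro allI impI)
    fix j i s assume a: "garc f V b j i s"
    then have "j \<in> V" using garc_in by auto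
    then obtain vs ss where w: "wk ?A vs ss" "hd vs = r" "last vs = j" using from_r by blast
    then have w': "wk ?A (vs @ [i]) (ss @ [s]) \<and> hd (vs @ [i]) = r \<and> last (vs @ [i]) = i"
      using wk_arc[of ?A vs ss i s] a by auto
    have "\<sigma> j = even (nneg ss)" using sig w by blast
    moreover have "\<sigma> i = even (nneg (ss @ [s]))" using sig w' by blast
    ultimately show "s = (\<sigma> j = \<sigma> i)" by (cases s) auto
  qed
  then show ?thesis by blast
qed

lemma good_arc:
  assumes "finite V" "x \<in> XX V b" "y \<in> XX V b" "i \<in> V" "f x i = x i" "f y i \<noteq> x i"
  shows "\<exists>j\<in>V. x j \<noteq> y j \<and> garc f V b j i (x j = x i)"
proof -
  have "f x i \<noteq> f y i" using assms(5,6) by simp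
  then obtain u j where u: "j \<in> V" "x j \<noteq> y j" "u \<in> XX V b" "u j = x j" "f u i = f x i"
    "f (u(j := \<not> u j)) i = f y i"
    using flipX[OF assms(1,2,3), of "\<lambda>z. f z i"] by blast
  have ne: "f u i \<noteq> f (u(j := \<not> u j)) i" using u(5,6) \<open>f x i \<noteq> f y i\<close> by simp
  have g: "garc f V b j i (f (u(j := True)) i)"
    using arc_of_flip[of u V b j i f, OF u(3,1) assms(4) ne] .
  have "f (u(j := True)) i = (x j = x i)"
  proof (cases "x j")
    case True
    then have "u(j := True) = u" using u(4) by (auto simp: fun_eq_iff)
    then show ?thesis using u(5) assms(5) True by auto
  next
    case False
    then have "u(j := True) = u(j := \<not> u j)" using u(4) by auto
    then show ?thesis using u(6) assms(5,6) False by auto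
  qed
  then show ?thesis using g u(1,2) by auto
qed

lemma U_minus:
  assumes "finite V" "\<forall>cs ts. cyc (garc f V b) cs ts \<longrightarrow> \<not> positive_cycle ts"
    "x \<in> XX V b" "y \<in> XX V b" "fixp f V x" "fixp f V y"
  shows "x = y"
proof (rule ccontr)
  assume ne: "x \<noteq> y"
  define D where "D = {i\<in>V. x i \<noteq> y i}"
  have "D \<noteq> {}"
  proof
    assume "D = {}"
    then have "x = y" using assms(3,4) unfolding D_def XX_def by (auto simp: fun_eq_iff)
    then show False using ne by simp
  qed
  let ?G = "\<lambda>j i s. garc f V b j i s \<and> s = (x j = x i)"
  have "\<exists>j\<in>D. \<exists>s. ?G j i s" if "i \<in> D" for i
  proof -
    have "i \<in> V" "f x i = x i" "f y i \<noteq> x i" using that assms(5,6) unfolding D_def fixp_def by auto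
    then obtain j where "j \<in> V" "x j \<noteq> y j" "garc f V b j i (x j = x i)"
      using good_arc[OF assms(1,3,4)] by blast
    then show ?thesis unfolding D_def by blast
  qed
  then obtain cs ts where c: "cyc ?G cs ts"
    using all_in_cycle[of D ?G] \<open>D \<noteq> {}\<close> assms(1) unfolding D_def by auto
  have "positive_cycle ts" using good_cyc_pos[OF c, of x] by blast
  moreover have "cyc (garc f V b) cs ts" using cyc_mono[OF c] by blast
  ultimately show False using assms(2) by blast
qed

lemma neg_sc_singleton:
  assumes "finite V" "V \<noteq> {}" "SC f V b" "allneg f V b" "z \<in> XX V b" "fixp f V z"
  shows "\<exists>v. V = {v} \<and> (\<forall>s. \<not> garc f V b v v s)"
proof -
  have "\<exists>v\<in>V. \<forall>j s. \<not> garc f V b j v s"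
  proof (rule ccontr)
    assume "\<not> (\<exists>v\<in>V. \<forall>j s. \<not> garc f V b j v s)"
    then have all: "\<forall>v\<in>V. \<exists>j s. garc f V b j v s" by blast
    let ?G = "\<lambda>j i s. garc f V b j i s \<and> s = (z j = z i)"
    have "\<exists>j\<in>V. \<exists>s. ?G j i s" if iV: "i \<in> V" for i
    proof -
      obtain j s where "garc f V b j i s" using all iV by blast
      then obtain u where u: "u \<in> XX V b" "j \<in> V" "f u i \<noteq> f (u(j := True)) i"
        unfolding garc_def by (cases s) auto
      have u2: "u(j := True) \<in> XX V b" using XX_upd[OF u(1,2)] .
      have fz: "f z i = z i" using assms(6) iV unfolding fixp_def by auto
      obtain y where y: "y \<in> XX V b" "f y i \<noteq> z i"
        using u u2 by (cases "f u i = z i") auto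
      obtain j' where "j' \<in> V" "garc f V b j' i (z j' = z i)"
        using good_arc[of V z b y i f, OF assms(1,5) y(1) iV fz y(2)] by blast
      then show ?thesis by blast
    qed
    then obtain cs ts where c: "cyc ?G cs ts"
      using all_in_cycle[of V ?G] assms(1,2) by auto
    have "positive_cycle ts" using good_cyc_pos[OF c, of z] by blast
    moreover have "cyc (garc f V b) cs ts" using cyc_mono[OF c] by blast
    ultimately show False using assms(4) unfolding allneg_def by blast
  qed
  then obtain v where v: "v \<in> V" "\<forall>j s. \<not> garc f V b j v s" by blast
  have "predclosed f V b {v}" unfolding predclosed_def using v by auto
  then have "{v} = V" using assms(3) v(1) unfolding SC_def by blast
  then show ?thesis using v by auto
qed

lemma singleton_sync:
  assumes "V = {v}" "\<forall>s. \<not> garc f V b v v s" "z \<in> XX V b" "fixp f V z"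
    "set w \<subseteq> V" "complete V w" "x \<in> XX V b"
  shows "word_update f w x = z"
proof -
  have "subseq [v] w" using assms(1,6) unfolding complete_def by auto
  then have "v \<in> set w" by (simp add: subseq_singleton_left)
  then obtain u w' where w: "w = u @ v # w'" by (meson split_list)
  define x1 where "x1 = word_update f u x"
  have x1: "x1 \<in> XX V b" unfolding x1_def using wu_X[OF assms(7)] assms(5) w by auto
  have "f x1 v = f z v"
    using indep[of V v "{}" f b x1 z] assms(1,2) x1 assms(3) by auto
  then have "async_update f v x1 = z"
    using assms(1,3,4) x1 unfolding async_update_def fixp_def XX_def by (auto simp: fun_eq_iff)
  then show ?thesis unfolding w wu_append x1_def[symmetric]
    using wu_fp[OF assms(4)] assms(5) w by auto
qed

lemma fixp_lift:
  assumes "finite V" "R \<subseteq> V" "predclosed f V b R" "y \<in> XX V b" "fixp f R y"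
    "u \<in> XX (V - R) y" "fixp f (V - R) u"
  shows "u \<in> XX V b \<and> fixp f V u"
proof -
  have uX: "u \<in> XX V b" using XX_sub[of "V - R" V y b] assms(4,6) by blast
  have agree: "\<forall>k\<in>R. u k = y k" using assms(6) unfolding XX_def by auto
  have "f u i = u i" if "i \<in> V" for i
  proof (cases "i \<in> R")
    case True
    have "f u i = f y i" by (rule indep_pc[OF assms(1-3) True uX assms(4) agree])
    then show ?thesis using assms(5) True agree unfolding fixp_def by auto
  next
    case False
    then show ?thesis using assms(7) that unfolding fixp_def by auto
  qed
  then show ?thesis using uX unfolding fixp_def by auto
qed

lemma allpos_sub: "S \<subseteq> V \<Longrightarrow> z \<in> XX V b \<Longrightarrow> allpos f V b \<Longrightarrow> allpos f S z"
  unfolding allpos_def using cyc_sub by blast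

lemma allneg_sub: "S \<subseteq> V \<Longrightarrow> z \<in> XX V b \<Longrightarrow> allneg f V b \<Longrightarrow> allneg f S z"
  unfolding allneg_def using cyc_sub by blast

lemma XX_self: "b \<in> XX V b"
  unfolding XX_def by auto

lemma XX_empty: "XX {} b = {b}"
  unfolding XX_def by auto

lemma card_split: "finite V \<Longrightarrow> R \<subseteq> V \<Longrightarrow> R \<noteq> {} \<Longrightarrow> R \<noteq> V \<Longrightarrow> card R < card V \<and> card (V - R) < card V"
proof -
  assume a: "finite V" "R \<subseteq> V" "R \<noteq> {}" "R \<noteq> V"
  have "R \<subset> V" using a by blast
  moreover have "V - R \<subset> V" using a by blast
  ultimately show ?thesis using psubset_card_mono[OF a(1)] by blast
qed

lemma not_SC: "\<not> SC f V b \<Longrightarrow> \<exists>R. R \<subseteq> V \<and> R \<noteq> {} \<and> R \<noteq> V \<and> predclosed f V b R"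
  unfolding SC_def by blast

lemma exists_pos:
  "finite V \<Longrightarrow> allpos f V b \<Longrightarrow> \<exists>y\<in>XX V b. fixp f V y"
proof (induction "card V" arbitrary: V b rule: less_induct)
  case less
  show ?case
  proof (cases "SC f V b")
    case sc: True
    show ?thesis
    proof (cases "V = {}")
      case True
      have "fixp f V b" unfolding fixp_def using True by simp
      then show ?thesis using XX_self[of b V] by blast
    next
      case False
      obtain \<sigma> where "balanced f V b \<sigma>" using sc_balanced[OF less.prems(1) False sc less.prems(2)] by blast
      then show ?thesis by (rule exists_balanced[OF less.prems(1)])
    qed
  next
    case False
    obtain R where R: "R \<subseteq> V" "R \<noteq> {}" "R \<noteq> V" "predclosed f V b R" using not_SC[OF False] by blast
    have c: "card R < card V" "card (V - R) < card V" using card_split[OF less.prems(1) R(1-3)] by auto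
    have fR: "finite R" "finite (V - R)" using less.prems(1) R(1) finite_subset by auto
    have pR: "allpos f R b" by (rule allpos_sub[OF R(1) XX_self less.prems(2)])
    obtain y where y: "y \<in> XX R b" "fixp f R y"
      using less.hyps[OF c(1) fR(1) pR] by blast
    have yV: "y \<in> XX V b" using XX_sub[OF R(1) XX_self] y(1) by blast
    have s2: "V - R \<subseteq> V" by blast
    have pS: "allpos f (V - R) y" by (rule allpos_sub[OF s2 yV less.prems(2)])
    obtain u where u: "u \<in> XX (V - R) y" "fixp f (V - R) u"
      using less.hyps[OF c(2) fR(2) pS] by blast
    have "u \<in> XX V b \<and> fixp f V u" by (rule fixp_lift[OF less.prems(1) R(1,4) yV y(2) u])
    then show ?thesis by blast
  qed
qed

lemma run_R:
  assumes "finite V" "R \<subseteq> V" "predclosed f V b R"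
  shows "x \<in> XX V b \<Longrightarrow> x' \<in> XX V b \<Longrightarrow> \<forall>k\<in>R. x k = x' k \<Longrightarrow> set w \<subseteq> V \<Longrightarrow>
    \<forall>k\<in>R. word_update f w x k = word_update f (filter (\<lambda>i. i \<in> R) w) x' k"
proof (induction w arbitrary: x x')
  case Nil
  then show ?case by simp
next
  case (Cons a w)
  have aV: "a \<in> V" using Cons.prems(4) by simp
  show ?case
  proof (cases "a \<in> R")
    case True
    have fa: "f x a = f x' a" by (rule indep_pc[OF assms True Cons.prems(1-3)])
    have X2: "async_update f a x \<in> XX V b" "async_update f a x' \<in> XX V b"
      using XX_upd[OF Cons.prems(1) aV] XX_upd[OF Cons.prems(2) aV] unfolding async_update_def by auto
    have ag: "\<forall>k\<in>R. async_update f a x k = async_update f a x' k"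
      using fa Cons.prems(3) unfolding async_update_def by auto
    have "\<forall>k\<in>R. word_update f w (async_update f a x) k = word_update f (filter (\<lambda>i. i \<in> R) w) (async_update f a x') k"
      using Cons.IH[OF X2 ag] Cons.prems(4) by simp
    then show ?thesis using True by simp
  next
    case False
    have X2: "async_update f a x \<in> XX V b"
      using XX_upd[OF Cons.prems(1) aV] unfolding async_update_def by auto
    have ag: "\<forall>k\<in>R. async_update f a x k = x' k"
      using False Cons.prems(3) unfolding async_update_def by auto
    have "\<forall>k\<in>R. word_update f w (async_update f a x) k = word_update f (filter (\<lambda>i. i \<in> R) w) x' k"
      using Cons.IH[OF X2 Cons.prems(2) ag] Cons.prems(4) by simp
    then show ?thesis using False by simp
  qed
qed

lemma run_S:
  assumes "finite V" "R \<subseteq> V" "predclosed f V b R" "z \<in> XX V b" "fixp f V z"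
  shows "x \<in> XX V b \<Longrightarrow> \<forall>k\<in>R. x k = z k \<Longrightarrow> set w \<subseteq> V \<Longrightarrow>
    word_update f w x = word_update f (filter (\<lambda>i. i \<notin> R) w) x"
proof (induction w arbitrary: x)
  case Nil
  then show ?case by simp
next
  case (Cons a w)
  have aV: "a \<in> V" using Cons.prems(3) by simp
  show ?case
  proof (cases "a \<in> R")
    case True
    have "f x a = f z a" by (rule indep_pc[OF assms(1-3) True Cons.prems(1) assms(4) Cons.prems(2)])
    also have "... = z a" using assms(5) aV unfolding fixp_def by auto
    also have "... = x a" using Cons.prems(2) True by auto
    finally have "async_update f a x = x" unfolding async_update_def by simp
    then show ?thesis using Cons.IH[of x] Cons.prems True by auto
  next
    case False
    have "async_update f a x \<in> XX V b"
      using XX_upd[OF Cons.prems(1) aV] unfolding async_update_def by auto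
    moreover have "\<forall>k\<in>R. async_update f a x k = z k" using Cons.prems(2) False
      unfolding async_update_def by auto
    ultimately show ?thesis using Cons.IH[of "async_update f a x"] False Cons.prems(3) by auto
  qed
qed

lemma split_sync:
  assumes "finite V" "R \<subseteq> V" "predclosed f V b R" "z \<in> XX V b" "fixp f V z"
    and hR: "\<And>w x. set w \<subseteq> R \<Longrightarrow> complete R w \<Longrightarrow> x \<in> XX R z \<Longrightarrow> word_update f w x = z"
    and hS: "\<And>w x. set w \<subseteq> V - R \<Longrightarrow> complete (V - R) w \<Longrightarrow> x \<in> XX (V - R) z \<Longrightarrow> word_update f w x = z"
    and "set w \<subseteq> V" "complete V w" "x \<in> XX V b"
  shows "word_update f w x = z"
proof -
  obtain w1 w2 where w: "w = w1 @ w2" "complete R w1" "complete (V - R) w2"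
    using complete_split[OF assms(1,2,9)] by blast
  have sw: "set w1 \<subseteq> V" "set w2 \<subseteq> V" using assms(8) w(1) by auto
  define x' where "x' = (\<lambda>k. if k \<in> R then x k else z k)"
  have x'R: "x' \<in> XX R z" unfolding x'_def XX_def by auto
  have x'V: "x' \<in> XX V b" using XX_sub[OF assms(2,4)] x'R by blast
  define x1 where "x1 = word_update f w1 x"
  have x1V: "x1 \<in> XX V b" unfolding x1_def using wu_X[OF assms(10) sw(1)] .
  have "\<forall>k\<in>R. x1 k = word_update f (filter (\<lambda>i. i \<in> R) w1) x' k"
    using run_R[OF assms(1-3) assms(10) x'V _ sw(1)] unfolding x1_def x'_def by auto
  moreover have "word_update f (filter (\<lambda>i. i \<in> R) w1) x' = z"
    using hR[OF _ complete_filter[OF w(2), of "\<lambda>i. i \<in> R"] x'R] by auto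
  ultimately have x1R: "\<forall>k\<in>R. x1 k = z k" by simp
  have x1S: "x1 \<in> XX (V - R) z" using x1V x1R assms(4) unfolding XX_def by auto
  have "word_update f w2 x1 = word_update f (filter (\<lambda>i. i \<notin> R) w2) x1"
    using run_S[OF assms(1-5) x1V x1R sw(2)] .
  moreover have "word_update f (filter (\<lambda>i. i \<notin> R) w2) x1 = z"
    using hS[OF _ complete_filter[OF w(3), of "\<lambda>i. i \<notin> R"] x1S] sw(2) by auto
  ultimately show ?thesis unfolding w(1) wu_append x1_def by simp
qed

lemma core:
  "finite V \<Longrightarrow> z \<in> XX V b \<Longrightarrow> fixp f V z \<Longrightarrow> (\<forall>y\<in>XX V b. fixp f V y \<longrightarrow> y = z) \<Longrightarrow>
   allpos f V b \<or> allneg f V b \<Longrightarrow> set w \<subseteq> V \<Longrightarrow> complete V w \<Longrightarrow> x \<in> XX V b \<Longrightarrow>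
   word_update f w x = z"
proof (induction "card V" arbitrary: V b z w x rule: less_induct)
  case less
  show ?case
  proof (cases "V = {}")
    case True
    then have "w = []" "x = z" using less.prems(2,6,8) XX_empty by auto
    then show ?thesis by simp
  next
    case Vne: False
    show ?thesis
    proof (cases "SC f V b")
      case True
      show ?thesis
      proof (cases "allpos f V b")
        case True
        obtain \<sigma> where bal: "balanced f V b \<sigma>" using sc_balanced[OF less.prems(1) Vne \<open>SC f V b\<close> True] by blast
        show ?thesis by (rule sync_balanced[OF less.prems(1) bal less.prems(2,3,4,6,7,8)])
      next
        case False
        then have ng: "allneg f V b" using less.prems(5) by auto
        obtain v where v: "V = {v}" "\<forall>s. \<not> garc f V b v v s"
          using neg_sc_singleton[OF less.prems(1) Vne \<open>SC f V b\<close> ng less.prems(2,3)] by blast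
        show ?thesis by (rule singleton_sync[OF v less.prems(2,3,6,7,8)])
      qed
    next
      case False
      obtain R where R: "R \<subseteq> V" "R \<noteq> {}" "R \<noteq> V" "predclosed f V b R" using not_SC[OF False] by blast
      have s2: "V - R \<subseteq> V" by blast
      have c: "card R < card V" "card (V - R) < card V" using card_split[OF less.prems(1) R(1-3)] by auto
      have fR: "finite R" "finite (V - R)" using less.prems(1) R(1) finite_subset by auto
      have zR: "z \<in> XX R z" "z \<in> XX (V - R) z" using XX_self by auto
      have fzR: "fixp f R z" "fixp f (V - R) z" using less.prems(3) R(1) unfolding fixp_def by auto
      have XR: "XX R z \<subseteq> XX V b" "XX (V - R) z \<subseteq> XX V b"
        using XX_sub[OF R(1) less.prems(2)] XX_sub[OF s2 less.prems(2)] by auto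
      have sgR: "allpos f R z \<or> allneg f R z" "allpos f (V - R) z \<or> allneg f (V - R) z"
      proof -
        show "allpos f R z \<or> allneg f R z"
          using less.prems(5) allpos_sub[OF R(1) less.prems(2)] allneg_sub[OF R(1) less.prems(2)] by blast
        show "allpos f (V - R) z \<or> allneg f (V - R) z"
          using less.prems(5) allpos_sub[OF s2 less.prems(2)] allneg_sub[OF s2 less.prems(2)] by blast
      qed
      have uR: "\<forall>y\<in>XX R z. fixp f R y \<longrightarrow> y = z"
      proof (intro ballI impI)
        fix y assume y: "y \<in> XX R z" "fixp f R y"
        have yV: "y \<in> XX V b" using XR y(1) by blast
        show "y = z"
        proof (cases "allpos f V b")
          case True
          obtain u where u: "u \<in> XX (V - R) y" "fixp f (V - R) u"
            using exists_pos[OF fR(2) allpos_sub[OF s2 yV True]] by blast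
          have "u \<in> XX V b \<and> fixp f V u" using fixp_lift[OF less.prems(1) R(1,4) yV y(2) u] .
          then have "u = z" using less.prems(4) by blast
          show ?thesis
          proof
            fix k show "y k = z k"
            proof (cases "k \<in> R")
              case True
              then have "u k = y k" using u(1) unfolding XX_def by auto
              then show ?thesis using \<open>u = z\<close> by simp
            next
              case False
              then show ?thesis using y(1) unfolding XX_def by auto
            qed
          qed
        next
          case False
          then have "allneg f V b" using less.prems(5) by auto
          then have "allneg f R z" by (rule allneg_sub[OF R(1) less.prems(2)])
          then have "\<forall>cs ts. cyc (garc f R z) cs ts \<longrightarrow> \<not> positive_cycle ts" unfolding allneg_def .
          then show ?thesis by (rule U_minus[OF fR(1) _ y(1) zR(1) y(2) fzR(1)])
        qed
      qed
      have uS: "\<forall>y\<in>XX (V - R) z. fixp f (V - R) y \<longrightarrow> y = z"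
      proof (intro ballI impI)
        fix y assume y: "y \<in> XX (V - R) z" "fixp f (V - R) y"
        have "y \<in> XX V b \<and> fixp f V y" using fixp_lift[OF less.prems(1) R(1,4) less.prems(2) fzR(1) y] .
        then show "y = z" using less.prems(4) by blast
      qed
      show ?thesis
      proof (rule split_sync[OF less.prems(1) R(1,4) less.prems(2,3) _ _ less.prems(6-8)])
        fix w x assume a: "set w \<subseteq> R" "complete R w" "x \<in> XX R z"
        show "word_update f w x = z" by (rule less.hyps[OF c(1) fR(1) zR(1) fzR(1) uR sgR(1) a])
      next
        fix w x assume a: "set w \<subseteq> V - R" "complete (V - R) w" "x \<in> XX (V - R) z"
        show "word_update f w x = z" by (rule less.hyps[OF c(2) fR(2) zR(2) fzR(2) uS sgR(2) a])
      qed
    qed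
  qed
qed

abbreviation VV :: "nat \<Rightarrow> nat set" where "VV n \<equiv> {0..<n}"
abbreviation bF :: config where "bF \<equiv> (\<lambda>_. False)"

lemma configs_XX: "configs n = XX (VV n) bF"
  unfolding configs_def XX_def by auto

lemma garc_signed: "garc f (VV n) bF = signed_arc n f"
  unfolding garc_def signed_arc_def configs_XX[symmetric] by (intro ext) auto

lemma is_cycle_cyc: "is_cycle n f = cyc (signed_arc n f)"
  unfolding is_cycle_def cyc_def by (intro ext) auto

lemma complete_n: "complete (VV n) w = n_complete n w"
  unfolding complete_def n_complete_def by simp

lemma fixp_eq: "BN n f \<Longrightarrow> x \<in> configs n \<Longrightarrow> fixp f (VV n) x \<longleftrightarrow> f x = x"
proof -
  assume a: "BN n f" "x \<in> configs n"
  then have fx: "f x \<in> configs n" unfolding BN_def by auto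
  have "f x i = x i" if "\<not> i < n" for i
    using fx a(2) that unfolding configs_def by auto
  then show ?thesis unfolding fixp_def fun_eq_iff by auto
qed

lemma allpos_n: "allpos f (VV n) bF \<longleftrightarrow> (\<forall>vs ss. is_cycle n f vs ss \<longrightarrow> positive_cycle ss)"
  unfolding allpos_def garc_signed is_cycle_cyc by simp

lemma allneg_n: "allneg f (VV n) bF \<longleftrightarrow> (\<forall>vs ss. is_cycle n f vs ss \<longrightarrow> \<not> positive_cycle ss)"
  unfolding allneg_def garc_signed is_cycle_cyc by simp

lemma sync_core:
  assumes "BN n f" "z \<in> configs n" "f z = z" "\<forall>y\<in>configs n. f y = y \<longrightarrow> y = z"
    "allpos f (VV n) bF \<or> allneg f (VV n) bF" "set w \<subseteq> VV n" "n_complete n w"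
  shows "synchronizes n w f"
proof -
  have "word_update f w x = z" if "x \<in> configs n" for x
  proof (rule core[of "VV n" z bF f w x])
    show "finite (VV n)" by simp
    show "z \<in> XX (VV n) bF" using assms(2) configs_XX by blast
    show "fixp f (VV n) z" using fixp_eq[OF assms(1,2)] assms(3) by simp
    show "\<forall>y\<in>XX (VV n) bF. fixp f (VV n) y \<longrightarrow> y = z"
      using fixp_eq[OF assms(1)] assms(4) configs_XX by blast
    show "allpos f (VV n) bF \<or> allneg f (VV n) bF" by (rule assms(5))
    show "set w \<subseteq> VV n" by (rule assms(6))
    show "complete (VV n) w" using assms(7) complete_n by simp
    show "x \<in> XX (VV n) bF" using that configs_XX by blast
  qed
  then show ?thesis unfolding synchronizes_def by blast
qed

lemma fwd_F:
  assumes "f \<in> class_F n" "set w \<subseteq> VV n" "n_complete n w"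
  shows "synchronizes n w f"
proof -
  have bn: "BN n f" and u: "\<exists>!x. x \<in> configs n \<and> f x = x"
    and sg: "(\<forall>vs ss. is_cycle n f vs ss \<longrightarrow> positive_cycle ss) \<or>
      (\<forall>vs ss. is_cycle n f vs ss \<longrightarrow> \<not> positive_cycle ss)"
    using assms(1) unfolding class_F_def by auto
  obtain z where z: "z \<in> configs n" "f z = z" "\<forall>y\<in>configs n. f y = y \<longrightarrow> y = z" using u by blast
  show ?thesis using sync_core[OF bn z _ assms(2,3)] sg allpos_n allneg_n by blast
qed

lemma fwd_Fp:
  assumes "f \<in> class_F_plus n" "set w \<subseteq> VV n" "n_complete n w"
  shows "synchronizes n w f"
proof -
  have bn: "BN n f" and sy: "synchronizing n f"
    and sg: "\<forall>vs ss. is_cycle n f vs ss \<longrightarrow> positive_cycle ss"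
    using assms(1) unfolding class_F_plus_def by auto
  have ap: "allpos f (VV n) bF" using sg allpos_n by blast
  obtain z where z: "z \<in> XX (VV n) bF" "fixp f (VV n) z" using exists_pos[OF _ ap] by auto
  have zc: "z \<in> configs n" using z(1) configs_XX by blast
  obtain w0 c where w0: "set w0 \<subseteq> VV n" "\<forall>x\<in>configs n. word_update f w0 x = c"
    using sy unfolding synchronizing_def synchronizes_def by auto
  have uq: "\<forall>y\<in>configs n. f y = y \<longrightarrow> y = z"
  proof (intro ballI impI)
    fix y assume y: "y \<in> configs n" "f y = y"
    have "word_update f w0 y = y" using wu_fp[OF _ w0(1)] fixp_eq[OF bn y(1)] y(2) by blast
    moreover have "word_update f w0 z = z" using wu_fp[OF z(2) w0(1)] .
    ultimately show "y = z" using w0(2) y(1) zc by metis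
  qed
  show ?thesis using sync_core[OF bn zc _ uq _ assms(2,3)] z(2) fixp_eq[OF bn zc] ap by blast
qed

lemma A_F:
  assumes "f \<in> class_A n"
  shows "f \<in> class_F n"
proof -
  have bn: "BN n f" and ac: "\<nexists>vs ss. is_cycle n f vs ss"
    using assms unfolding class_A_def acyclic_BN_def by auto
  have ap: "allpos f (VV n) bF" and an: "allneg f (VV n) bF"
    using ac allpos_n allneg_n by blast+
  obtain z where z: "z \<in> XX (VV n) bF" "fixp f (VV n) z" using exists_pos[OF _ ap] by auto
  have zc: "z \<in> configs n" using z(1) configs_XX by blast
  have uq: "y = z" if "y \<in> configs n" "f y = y" for y
  proof -
    have "y \<in> XX (VV n) bF" "fixp f (VV n) y" using that fixp_eq[OF bn] configs_XX by auto
    then show ?thesis using U_minus[OF _ _ _ z(1) _ z(2)] an unfolding allneg_def by blast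
  qed
  have "\<exists>!x. x \<in> configs n \<and> f x = x"
    using zc z(2) fixp_eq[OF bn zc] uq by blast
  then show ?thesis unfolding class_F_def using bn ac by blast
qed

lemma concat_subseq: "set p \<subseteq> VV n \<Longrightarrow> subseq p (concat (replicate (length p) [0..<n]))"
proof (induction p)
  case Nil
  then show ?case by simp
next
  case (Cons a p)
  have "subseq [a] [0..<n]" using Cons.prems by (simp add: subseq_singleton_left)
  moreover have "subseq p (concat (replicate (length p) [0..<n]))" using Cons by simp
  ultimately have "subseq ([a] @ p) ([0..<n] @ concat (replicate (length p) [0..<n]))"
    by (rule list_emb_append_mono)
  then show ?case by simp
qed

lemma complete_exists: "n_complete n (concat (replicate n [0..<n]))"
  unfolding n_complete_def
proof (intro allI impI)
  fix p :: "nat list" assume p: "distinct p \<and> set p = VV n"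
  then have "length p = n" using distinct_card by fastforce
  then show "subseq p (concat (replicate n [0..<n]))" using concat_subseq[of p n] p by auto
qed

lemma A_Fp:
  assumes "f \<in> class_A n"
  shows "f \<in> class_F_plus n"
proof -
  have bn: "BN n f" and ac: "\<nexists>vs ss. is_cycle n f vs ss"
    using assms unfolding class_A_def acyclic_BN_def by auto
  have "set (concat (replicate n [0..<n])) \<subseteq> VV n" by auto
  then have "synchronizes n (concat (replicate n [0..<n])) f"
    using fwd_F[OF A_F[OF assms] _ complete_exists] by blast
  then have "synchronizing n f" unfolding synchronizing_def using \<open>set _ \<subseteq> _\<close> by blast
  then show ?thesis unfolding class_F_plus_def using bn ac by blast
qed

definition chain :: "nat \<Rightarrow> nat list \<Rightarrow> config \<Rightarrow> config" where
  "chain n p x i = (i < n \<and> (i = p ! 0 \<or> (\<exists>k. Suc k < n \<and> p ! Suc k = i \<and> x (p ! k))))"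

context
  fixes n :: nat and p :: "nat list"
  assumes dp: "distinct p" and sp: "set p = VV n"
begin

lemma lp: "length p = n"
  using distinct_card[OF dp] sp by simp

lemma chain_BN: "BN n (chain n p)"
  unfolding BN_def configs_def chain_def by auto

lemma chain_diff:
  assumes "chain n p y i \<noteq> chain n p y' i"
  shows "\<exists>k. Suc k < n \<and> p ! Suc k = i \<and> y (p ! k) \<noteq> y' (p ! k)"
proof -
  have "i < n" "i \<noteq> p ! 0" using assms unfolding chain_def by auto
  show ?thesis
  proof (cases "chain n p y i")
    case True
    then obtain k where k: "Suc k < n" "p ! Suc k = i" "y (p ! k)"
      using \<open>i \<noteq> p ! 0\<close> unfolding chain_def by auto
    have "\<not> y' (p ! k)" using assms True k unfolding chain_def by auto
    then show ?thesis using k by auto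
  next
    case False
    then have T: "chain n p y' i" using assms by auto
    then obtain k where k: "Suc k < n" "p ! Suc k = i" "y' (p ! k)"
      using \<open>i \<noteq> p ! 0\<close> unfolding chain_def by auto
    have "\<not> y (p ! k)" using False k \<open>i < n\<close> unfolding chain_def by auto
    then show ?thesis using k by auto
  qed
qed

lemma chain_arc:
  assumes "signed_arc n (chain n p) j i s"
  shows "\<exists>k. Suc k < n \<and> p ! k = j \<and> p ! Suc k = i"
proof -
  obtain x where x: "\<not> x j" "chain n p x i \<noteq> chain n p (x(j := True)) i"
    using assms unfolding signed_arc_def by (cases s) auto
  obtain k where k: "Suc k < n" "p ! Suc k = i" "x (p ! k) \<noteq> (x(j := True)) (p ! k)"
    using chain_diff[OF x(2)] by blast
  have "p ! k = j" using k(3) by (cases "p ! k = j") auto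
  then show ?thesis using k by auto
qed

lemma chain_acyclic: "acyclic_BN n (chain n p)"
  unfolding acyclic_BN_def
proof
  assume "\<exists>vs ss. is_cycle n (chain n p) vs ss"
  then obtain vs ss where c: "is_cycle n (chain n p) vs ss" by blast
  define m where "m = length vs"
  have m0: "m > 0" using c unfolding is_cycle_def m_def by auto
  have "\<forall>t. \<exists>k. t < m \<longrightarrow> Suc k < n \<and> p ! k = vs ! t \<and> p ! Suc k = vs ! ((t + 1) mod m)"
    using c chain_arc unfolding is_cycle_def m_def by blast
  then obtain K where K: "\<And>t. t < m \<Longrightarrow> Suc (K t) < n \<and> p ! K t = vs ! t \<and> p ! Suc (K t) = vs ! ((t + 1) mod m)"
    by metis
  have step: "K ((t + 1) mod m) = Suc (K t)" if "t < m" for t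
  proof -
    have t': "(t + 1) mod m < m" using m0 by simp
    have "p ! K ((t + 1) mod m) = p ! Suc (K t)" using K[OF t'] K[OF that] by simp
    moreover have "K ((t + 1) mod m) < length p" "Suc (K t) < length p" using K[OF t'] K[OF that] lp by auto
    ultimately show ?thesis using nth_eq_iff_index_eq[OF dp] by blast
  qed
  define M where "M = Max (K ` {..<m})"
  have "M \<in> K ` {..<m}" unfolding M_def using m0 by (intro Max_in) auto
  then obtain t0 where t0: "t0 < m" "K t0 = M" by auto
  have "K ((t0 + 1) mod m) \<le> M" unfolding M_def using m0 by (intro Max_ge) auto
  then show False using step[OF t0(1)] t0(2) by simp
qed

lemma chain_A: "chain n p \<in> class_A n"
  unfolding class_A_def using chain_BN chain_acyclic by auto

lemma chain_run:
  "\<forall>k<n. x (p ! k) \<longrightarrow> subseq (take (Suc k) p) v \<Longrightarrow>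
   \<forall>k<n. word_update (chain n p) w x (p ! k) \<longrightarrow> subseq (take (Suc k) p) (v @ w)"
proof (induction w arbitrary: x v)
  case Nil
  then show ?case by simp
next
  case (Cons a w)
  define x' where "x' = x(a := chain n p x a)"
  have "\<forall>k<n. x' (p ! k) \<longrightarrow> subseq (take (Suc k) p) (v @ [a])"
  proof (intro allI impI)
    fix k assume k: "k < n" "x' (p ! k)"
    show "subseq (take (Suc k) p) (v @ [a])"
    proof (cases "p ! k = a")
      case False
      then have "x (p ! k)" using k unfolding x'_def by simp
      then have "subseq (take (Suc k) p) v" using Cons.prems k(1) by blast
      then show ?thesis by (simp add: subseq_rev_drop_many)
    next
      case True
      then have ca: "chain n p x a" using k unfolding x'_def by simp
      have kl: "k < length p" using k lp by simp
      show ?thesis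
      proof (cases "a = p ! 0")
        case True
        have "p ! k = p ! 0" using \<open>p ! k = a\<close> True by simp
        moreover have "0 < length p" using kl by linarith
        ultimately have "k = 0" using nth_eq_iff_index_eq[OF dp kl] by blast
        then have "take (Suc k) p = [a]" using True kl by (cases p) auto
        then show ?thesis by (simp add: subseq_singleton_left)
      next
        case False
        then obtain k' where k': "Suc k' < n" "p ! Suc k' = a" "x (p ! k')"
          using ca unfolding chain_def by auto
        have "k = Suc k'" using \<open>p ! k = a\<close> k'(2) nth_eq_iff_index_eq[OF dp kl] lp k'(1) by metis
        have "subseq (take (Suc k') p) v" using Cons.prems k'(1,3) by simp
        then have "subseq (take (Suc k') p @ [a]) (v @ [a])" by (rule list_emb_append_mono) simp
        moreover have "take (Suc k) p = take (Suc k') p @ [a]"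
          using \<open>k = Suc k'\<close> \<open>p ! k = a\<close> kl by (simp add: take_Suc_conv_app_nth)
        ultimately show ?thesis by simp
      qed
    qed
  qed
  then have "\<forall>k<n. word_update (chain n p) w x' (p ! k) \<longrightarrow> subseq (take (Suc k) p) ((v @ [a]) @ w)"
    using Cons.IH by blast
  then show ?case unfolding x'_def by (simp add: async_update_def)
qed

lemma chain_not_sync:
  assumes "\<not> subseq p w"
  shows "\<not> synchronizes n w (chain n p)"
proof
  assume s: "synchronizes n w (chain n p)"
  have n0: "n > 0" using assms lp by (cases p) auto
  define x0 :: config where "x0 = (\<lambda>_. False)"
  define x1 :: config where "x1 = (\<lambda>i. i < n)"
  have c: "x0 \<in> configs n" "x1 \<in> configs n" unfolding x0_def x1_def configs_def by auto
  have r0: "\<not> word_update (chain n p) w x0 (p ! (n - 1))"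
  proof
    assume a: "word_update (chain n p) w x0 (p ! (n - 1))"
    have "\<forall>k<n. x0 (p ! k) \<longrightarrow> subseq (take (Suc k) p) []" unfolding x0_def by simp
    then have "\<forall>k<n. word_update (chain n p) w x0 (p ! k) \<longrightarrow> subseq (take (Suc k) p) ([] @ w)"
      by (rule chain_run)
    then have "subseq (take (Suc (n - 1)) p) ([] @ w)" using a n0 by (meson diff_less zero_less_one)
    then show False using assms n0 lp by simp
  qed
  have fx1: "chain n p x1 = x1"
  proof
    fix i show "chain n p x1 i = x1 i"
    proof (cases "i < n")
      case True
      then have "i \<in> set p" using sp by auto
      then obtain m where m: "m < length p" "p ! m = i" by (meson in_set_conv_nth)
      show ?thesis
      proof (cases m)
        case 0 then show ?thesis using m True unfolding chain_def x1_def by auto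
      next
        case (Suc k)
        have "p ! k \<in> set p" using m Suc by auto
        then have "x1 (p ! k)" using sp unfolding x1_def by auto
        then show ?thesis using m Suc True lp unfolding chain_def x1_def by auto
      qed
    next
      case False
      then show ?thesis unfolding chain_def x1_def by auto
    qed
  qed
  have "word_update (chain n p) w x1 = x1"
    by (induction w) (auto simp: async_update_def fx1)
  moreover have "x1 (p ! (n - 1))" using sp lp n0 unfolding x1_def
    by (metis diff_less less_numeral_extra(1) nth_mem atLeastLessThan_iff)
  moreover obtain cst where "\<forall>x\<in>configs n. word_update (chain n p) w x = cst"
    using s unfolding synchronizes_def by blast
  ultimately show False using r0 c by metis
qed

end

lemma not_complete_witness:
  assumes "\<not> n_complete n w"
  shows "\<exists>f\<in>class_A n. \<not> synchronizes n w f"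
proof -
  obtain p where p: "distinct p" "set p = VV n" "\<not> subseq p w"
    using assms unfolding n_complete_def by blast
  show ?thesis using chain_A[OF p(1,2)] chain_not_sync[OF p] by blast
qed

theorem proposition10:
  fixes n :: nat and w :: "nat list"
  assumes "set w \<subseteq> {0..<n}"
  shows "(n_complete n w \<longleftrightarrow> (\<forall>f\<in>class_F n. synchronizes n w f))
       \<and> (n_complete n w \<longleftrightarrow> (\<forall>f\<in>class_F_plus n. synchronizes n w f))
       \<and> (n_complete n w \<longleftrightarrow> (\<forall>f\<in>class_A n. synchronizes n w f))"
proof (intro conjI iffI)
  show "\<forall>f\<in>class_F n. synchronizes n w f" if "n_complete n w"
    using fwd_F assms that by blast
  show "\<forall>f\<in>class_F_plus n. synchronizes n w f" if "n_complete n w"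
    using fwd_Fp assms that by blast
  show "\<forall>f\<in>class_A n. synchronizes n w f" if "n_complete n w"
    using fwd_F A_F assms that by blast
  show "n_complete n w" if "\<forall>f\<in>class_F n. synchronizes n w f"
    using not_complete_witness A_F that by blast
  show "n_complete n w" if "\<forall>f\<in>class_F_plus n. synchronizes n w f"
    using not_complete_witness A_Fp that by blast
  show "n_complete n w" if "\<forall>f\<in>class_A n. synchronizes n w f"
    using not_complete_witness that by blast
qed

end
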